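(* Every zero-error randomized streaming algorithm for \textsc{Find-Duplicate} that is $\frac{n}{s}$-concentrated must use $\Omega\left(\frac{s}{\log n}\right)$ space.
   Context: \textsc{Find-Duplicate}: the input is a stream of $3n/2$ integers, each in $\{1,\dots,n\}$; the goal is to output an integer that appears at least twice in the stream. A randomized algorithm is zero-error if with probability one it either outputs a valid output (an integer that indeed appears at least twice) or outputs the failure symbol $\bot$; it never outputs an invalid answer. An algorithm $A$ is $k$-concentrated if for every valid input $x$ there is some output $F(x)$ such that $\Pr_r[A(x,r)=F(x)]\ge \frac1k$, where $r$ is the algorithm's randomness. Space is measured in bits of memory of the one-pass streaming algorithm. *)

theory Defs
  imports "HOL-Probability.Probability" "HOL-Library.Multiset"
begin

text \<open>A deterministic one-pass streaming algorithm: initial state, transition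
  function (state, next stream symbol) to state, and output function on the final
  state (None = failure symbol bottom). States are natural numbers; an algorithm
  uses S bits of memory if all reachable states lie below 2^S.\<close>

type_synonym det_alg = "nat \<times> (nat \<Rightarrow> nat \<Rightarrow> nat) \<times> (nat \<Rightarrow> nat option)"

fun run_alg :: "det_alg \<Rightarrow> nat list \<Rightarrow> nat option" where
  "run_alg (q0, delta, out) xs = out (foldl delta q0 xs)"

fun det_space :: "nat \<Rightarrow> nat \<Rightarrow> det_alg \<Rightarrow> bool" where
  "det_space n S (q0, delta, out) \<longleftrightarrow>
     q0 < 2 ^ S \<and> (\<forall>q < 2 ^ S. \<forall>a \<in> {1..n}. delta q a < 2 ^ S)"

text \<open>A randomized streaming algorithm is a probability distribution over
  deterministic algorithms (the randomness r selects the deterministic algorithm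
  A(., r)).\<close>

definition rand_space :: "nat \<Rightarrow> nat \<Rightarrow> det_alg pmf \<Rightarrow> bool" where
  "rand_space n S A \<longleftrightarrow> (\<forall>D \<in> set_pmf A. det_space n S D)"

definition valid_input :: "nat \<Rightarrow> nat list \<Rightarrow> bool" where
  "valid_input n xs \<longleftrightarrow> length xs = 3 * n div 2 \<and> set xs \<subseteq> {1..n}"

definition is_dup :: "nat list \<Rightarrow> nat \<Rightarrow> bool" where
  "is_dup xs a \<longleftrightarrow> count (mset xs) a \<ge> 2"

definition zero_error :: "nat \<Rightarrow> det_alg pmf \<Rightarrow> bool" where
  "zero_error n A \<longleftrightarrow>
     (\<forall>xs. valid_input n xs \<longrightarrow>
        (AE D in measure_pmf A. (case run_alg D xs of None \<Rightarrow> True | Some a \<Rightarrow> is_dup xs a)))"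

definition concentrated :: "nat \<Rightarrow> real \<Rightarrow> det_alg pmf \<Rightarrow> bool" where
  "concentrated n k A \<longleftrightarrow>
     (\<forall>xs. valid_input n xs \<longrightarrow>
        (\<exists>a. is_dup xs a \<and> measure_pmf.prob A {D. run_alg D xs = Some a} \<ge> 1 / k))"

end

theory Submission
  imports Defs
begin

definition st :: "det_alg \<Rightarrow> nat list \<Rightarrow> nat" where
  "st D xs = foldl (fst (snd D)) (fst D) xs"

lemma run_append: "run_alg D (xs @ ys) = snd (snd D) (foldl (fst (snd D)) (st D xs) ys)"
  by (cases D) (simp add: st_def)

lemma run_st: "run_alg D xs = snd (snd D) (st D xs)"
  by (cases D) (simp add: st_def)

lemma st_bound:
  assumes "det_space n S D" "set xs \<subseteq> {1..n}"
  shows "st D xs < 2 ^ S"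
  using assms(2)
proof (induction xs rule: rev_induct)
  case Nil
  then show ?case using assms(1) by (cases D) (simp add: st_def)
next
  case (snoc x xs)
  then have "st D xs < 2 ^ S" by auto
  moreover have "x \<in> {1..n}" using snoc by auto
  ultimately show ?case using assms(1) by (cases D) (auto simp add: st_def)
qed

lemma count_sl: "finite X \<Longrightarrow> count (mset (sorted_list_of_set X)) a = (if a \<in> X then 1 else 0)"
proof -
  assume f: "finite X"
  have "mset (sorted_list_of_set X) = mset_set X"
    using f by (metis distinct_sorted_list_of_set mset_set_set set_sorted_list_of_set)
  then show ?thesis using f by (simp add: count_mset_set')
qed

lemma zero_errorD:
  assumes "zero_error n A" "D \<in> set_pmf A" "valid_input n xs" "run_alg D xs = Some a"
  shows "is_dup xs a"
  using assms unfolding zero_error_def AE_measure_pmf_iff by fastforce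

lemma sum_prob:
  fixes A :: "'a pmf"
  assumes "finite I"
  shows "(\<Sum>i\<in>I. measure_pmf.prob A {D. P i D}) = measure_pmf.expectation A (\<lambda>D. real (card {i\<in>I. P i D}))"
proof -
  have "(\<Sum>i\<in>I. measure_pmf.prob A {D. P i D}) = (\<Sum>i\<in>I. measure_pmf.expectation A (indicator {D. P i D}))"
    by simp
  also have "\<dots> = measure_pmf.expectation A (\<lambda>D. \<Sum>i\<in>I. indicator {D. P i D} D)"
    by (subst Bochner_Integration.integral_sum) (auto intro!: measure_pmf.integrable_const_bound[where B=1])
  also have "\<dots> = measure_pmf.expectation A (\<lambda>D. real (card {i\<in>I. P i D}))"
  proof (rule Bochner_Integration.integral_cong[OF refl])
    fix D
    have "(\<Sum>i\<in>I. indicator {D. P i D} D :: real) = (\<Sum>i\<in>I. if P i D then 1 else 0)"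
      by (simp add: indicator_def of_bool_def)
    also have "\<dots> = real (card {i\<in>I. P i D})"
    proof -
      have eqI: "I \<inter> {i. P i D} = {i\<in>I. P i D}" by blast
      show ?thesis using assms by (simp add: sum.If_cases eqI)
    qed
    finally show "(\<Sum>i\<in>I. indicator {D. P i D} D :: real) = real (card {i\<in>I. P i D})" .
  qed
  finally show ?thesis .
qed

lemma exp_card_le:
  fixes A :: "'a pmf"
  assumes "finite I" "\<And>D. D \<in> set_pmf A \<Longrightarrow> real (card {i\<in>I. P i D}) \<le> c"
  shows "measure_pmf.expectation A (\<lambda>D. real (card {i\<in>I. P i D})) \<le> c"
proof (rule measure_pmf.integral_le_const)
  show "integrable (measure_pmf A) (\<lambda>D. real (card {i\<in>I. P i D}))"
    by (rule measure_pmf.integrable_const_bound[where B="real (card I)"])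
       (auto intro!: card_mono assms(1))
  show "AE x in measure_pmf A. real (card {i \<in> I. P i x}) \<le> c"
    using assms(2) by (simp add: AE_measure_pmf_iff)
qed

lemma binom_ratio:
  assumes "t \<le> L" "L \<le> n"
  shows "real ((n - t) choose (L - t)) * real n ^ t \<le> real (n choose L) * real L ^ t"
  using assms
proof (induction t)
  case 0
  then show ?case by simp
next
  case (Suc t)
  define n' where "n' = n - t"
  define L' where "L' = L - t"
  have L'pos: "L' \<ge> 1" using Suc.prems by (simp add: L'_def)
  have n'pos: "n' \<ge> 1" using Suc.prems by (simp add: n'_def)
  have id: "real (n' - 1 choose (L' - 1)) * real n' = real (n' choose L') * real L'"
  proof -
    obtain a where a: "n' = Suc a" using n'pos by (cases n') auto
    obtain b where b: "L' = Suc b" using L'pos by (cases L') auto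
    have "Suc a * (a choose b) = (Suc a choose Suc b) * Suc b" by (rule Suc_times_binomial_eq)
    then have "real (Suc a) * real (a choose b) = real (Suc a choose Suc b) * real (Suc b)"
      by (metis of_nat_mult)
    then show ?thesis unfolding a b by (simp only: diff_Suc_1) (simp add: algebra_simps)
  qed
  have key: "real (n' - 1 choose (L' - 1)) * real n \<le> real (n' choose L') * real L"
  proof -
    have "real (n' - 1 choose (L' - 1)) * real n * real n' = real (n' choose L') * real L' * real n"
      using id by (simp add: algebra_simps)
    also have "\<dots> \<le> real (n' choose L') * real L * real n'"
    proof -
      have "real L' * real n \<le> real L * real n'"
      proof -
        have "real L * real t \<le> real n * real t" using Suc.prems by (intro mult_right_mono) auto
        moreover have "real L' = real L - real t" "real n' = real n - real t"
          using Suc.prems by (auto simp: L'_def n'_def of_nat_diff)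
        ultimately show ?thesis by (simp add: left_diff_distrib right_diff_distrib mult.commute)
      qed
      then have "real (n' choose L') * (real L' * real n) \<le> real (n' choose L') * (real L * real n')"
        by (rule mult_left_mono) simp
      then show ?thesis by (simp only: mult.assoc)
    qed
    finally show ?thesis using n'pos by (simp add: mult_le_cancel_right)
  qed
  have tL: "t \<le> L" "L \<le> n" using Suc.prems by simp_all
  have IH: "real (n' choose L') * real n ^ t \<le> real (n choose L) * real L ^ t"
    using Suc.IH[OF tL] unfolding n'_def L'_def .
  have e1: "n - Suc t = n' - 1" "L - Suc t = L' - 1" by (simp_all add: n'_def L'_def)
  have "real ((n - Suc t) choose (L - Suc t)) * real n ^ Suc t
        = (real (n' - 1 choose (L' - 1)) * real n) * real n ^ t"
    unfolding e1 power_Suc by (simp only: mult_ac)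
  also have "\<dots> \<le> (real (n' choose L') * real L) * real n ^ t"
    by (rule mult_right_mono[OF key]) simp
  also have "\<dots> = real L * (real (n' choose L') * real n ^ t)" by (simp only: mult_ac)
  also have "\<dots> \<le> real L * (real (n choose L) * real L ^ t)"
    by (rule mult_left_mono[OF IH]) simp
  also have "\<dots> = real (n choose L) * real L ^ Suc t" unfolding power_Suc by (simp only: mult_ac)
  finally show ?case .
qed


lemma count_super:
  assumes "U \<subseteq> {1..n}" "card U = t"
  shows "card {X. (X \<subseteq> {1..n} \<and> card X = L) \<and> U \<subseteq> X} \<le> (n - t) choose (L - t)"
proof -
  have fU: "finite U" using assms(1) finite_subset by blast
  have "card {X. (X \<subseteq> {1..n} \<and> card X = L) \<and> U \<subseteq> X} \<le> card {Z. Z \<subseteq> {1..n} - U \<and> card Z = L - t}"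
  proof (rule card_inj_on_le[where f="\<lambda>X. X - U"])
    show "inj_on (\<lambda>X. X - U) {X. (X \<subseteq> {1..n} \<and> card X = L) \<and> U \<subseteq> X}"
      by (rule inj_onI) blast
    show "(\<lambda>X. X - U) ` {X. (X \<subseteq> {1..n} \<and> card X = L) \<and> U \<subseteq> X} \<subseteq> {Z. Z \<subseteq> {1..n} - U \<and> card Z = L - t}"
    proof (rule image_subsetI)
      fix X assume X: "X \<in> {X. (X \<subseteq> {1..n} \<and> card X = L) \<and> U \<subseteq> X}"
      then have "card (X - U) = card X - card U"
        using fU by (intro card_Diff_subset) auto
      then show "X - U \<in> {Z. Z \<subseteq> {1..n} - U \<and> card Z = L - t}"
        using X assms(2) by auto
    qed
    show "finite {Z. Z \<subseteq> {1..n} - U \<and> card Z = L - t}"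
      by (rule finite_subset[of _ "Pow ({1..n} - U)"]) auto
  qed
  also have "\<dots> = card ({1..n} - U) choose (L - t)"
    by (rule n_subsets) simp
  also have "card ({1..n} - U) = n - t"
    using assms fU by (simp add: card_Diff_subset)
  finally show ?thesis .
qed


lemma core:
  fixes A :: "det_alg pmf" and n m r L \<tau> S :: nat and s :: real
  assumes n: "n = 2*m" and m2: "m \<ge> 2" and r: "r = m div 2" and L: "L = m + r"
    and tpos: "0 < \<tau>" and tL: "\<tau> \<le> L"
    and ze: "zero_error n A" and conc: "concentrated n (real n / s) A"
    and sp: "rand_space n S A" and spos: "s > 0"
  shows "s / real n \<le> real \<tau> / real r + 2^S * (real L / real n)^\<tau>"
proof -
  define \<Omega> where "\<Omega> = {X. X \<subseteq> {1..n} \<and> card X = L}"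
  define sl where "sl = (sorted_list_of_set :: nat set \<Rightarrow> nat list)"
  define T where "T = (\<lambda>D X. {a. \<forall>X'\<in>\<Omega>. st D (sl X') = st D (sl X) \<longrightarrow> a \<in> X'})"
  define Bad where "Bad = (\<lambda>D. {X\<in>\<Omega>. \<tau> \<le> card (T D X)})"
  have finO: "finite \<Omega>"
    by (rule finite_subset[of _ "Pow {1..n}"]) (auto simp: \<Omega>_def)
  have cardO: "card \<Omega> = n choose L"
    unfolding \<Omega>_def using n_subsets[of "{1..n}" L] by simp
  have Ofin: "finite X" if "X \<in> \<Omega>" for X
    using that finite_subset[of X "{1..n}"] by (auto simp: \<Omega>_def)
  have slset: "set (sl X) = X" if "X \<in> \<Omega>" for X
    using Ofin[OF that] by (simp add: sl_def)
  have sllen: "length (sl X) = L" if "X \<in> \<Omega>" for X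
    using that by (simp add: sl_def \<Omega>_def)
  have TX: "T D X \<subseteq> X" if "X \<in> \<Omega>" for D X
    using that by (auto simp: T_def)
  have Tcong: "T D X' = T D X" if "st D (sl X') = st D (sl X)" for D X X'
    using that by (simp add: T_def)
  have stb: "st D (sl X) < 2^S" if "D \<in> set_pmf A" "X \<in> \<Omega>" for D X
    using sp that st_bound[of n S D "sl X"] slset[OF that(2)]
    by (auto simp: rand_space_def \<Omega>_def)
  have rpos: "r > 0" using m2 r by simp
  have Ln: "L \<le> n" using n L r by simp
  have nr: "L + (n - r) = 3 * n div 2" using n L r by simp

  have key: "a \<in> T D X"
    if D: "D \<in> set_pmf A" and X: "X \<in> \<Omega>" and Y: "Y \<subseteq> {1..n}" "card Y = n - r"
      and run: "run_alg D (sl X @ sl Y) = Some a" for D X Y a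
    unfolding T_def
  proof (intro CollectI ballI impI)
    fix X' assume X': "X' \<in> \<Omega>" and eq: "st D (sl X') = st D (sl X)"
    have run': "run_alg D (sl X' @ sl Y) = Some a"
      using run eq by (simp add: run_append)
    have fY: "finite Y" using Y(1) finite_subset by blast
    have "valid_input n (sl X' @ sl Y)"
      unfolding valid_input_def using sllen[OF X'] slset[OF X'] X' Y fY nr
      by (auto simp: sl_def \<Omega>_def)
    then have "is_dup (sl X' @ sl Y) a" using zero_errorD[OF ze D _ run'] by blast
    then have "2 \<le> count (mset (sl X')) a + count (mset (sl Y)) a"
      by (simp add: is_dup_def)
    moreover have "count (mset (sl Y)) a \<le> 1" using count_sl[OF fY] by (simp add: sl_def)
    ultimately have "count (mset (sl X')) a \<noteq> 0" by linarith
    then show "a \<in> X'" using count_sl[OF Ofin[OF X']] by (simp add: sl_def split: if_splits)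
  qed

  have badcard: "card (Bad D) \<le> 2^S * ((n - \<tau>) choose (L - \<tau>))" if D: "D \<in> set_pmf A" for D
  proof -
    define B where "B = (\<lambda>q. {X\<in>Bad D. st D (sl X) = q})"
    have sub: "Bad D \<subseteq> (\<Union>q\<in>{..<2^S}. B q)"
      using stb[OF D] by (auto simp: B_def Bad_def)
    have Bq: "card (B q) \<le> (n - \<tau>) choose (L - \<tau>)" for q
    proof (cases "B q = {}")
      case True then show ?thesis by simp
    next
      case False
      then obtain X0 where X0: "X0 \<in> B q" by blast
      then have X0O: "X0 \<in> \<Omega>" and X0c: "\<tau> \<le> card (T D X0)" and X0q: "st D (sl X0) = q"
        by (auto simp: B_def Bad_def)
      obtain U where U: "U \<subseteq> T D X0" "card U = \<tau>" using ex_card[OF X0c] by blast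
      have "T D X0 \<subseteq> X0" by (rule TX[OF X0O])
      then have UX0: "U \<subseteq> {1..n}" using U(1) X0O unfolding \<Omega>_def by blast
      have "B q \<subseteq> {X. (X \<subseteq> {1..n} \<and> card X = L) \<and> U \<subseteq> X}"
      proof
        fix X assume X: "X \<in> B q"
        then have XO: "X \<in> \<Omega>" and Xq: "st D (sl X) = q" by (auto simp: B_def Bad_def)
        have "T D X = T D X0" using Tcong Xq X0q by metis
        then have "U \<subseteq> X" using U(1) TX[OF XO] by blast
        then show "X \<in> {X. (X \<subseteq> {1..n} \<and> card X = L) \<and> U \<subseteq> X}" using XO by (auto simp: \<Omega>_def)
      qed
      then have "card (B q) \<le> card {X. (X \<subseteq> {1..n} \<and> card X = L) \<and> U \<subseteq> X}"
        by (intro card_mono) (auto intro!: finite_subset[of _ "Pow {1..n}"])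
      also have "\<dots> \<le> (n - \<tau>) choose (L - \<tau>)" by (rule count_super[OF UX0 U(2)])
      finally show ?thesis .
    qed
    have "card (Bad D) \<le> card (\<Union>q\<in>{..<2^S}. B q)"
      by (rule card_mono[OF _ sub]) (auto simp: B_def Bad_def intro!: finite_subset[OF _ finO])
    also have "\<dots> \<le> (\<Sum>q\<in>{..<2^S}. card (B q))" by (rule card_UN_le) simp
    also have "\<dots> \<le> (\<Sum>q\<in>{..<(2::nat)^S}. (n - \<tau>) choose (L - \<tau>))" by (rule sum_mono[OF Bq])
    also have "\<dots> = 2^S * ((n - \<tau>) choose (L - \<tau>))" by simp
    finally show ?thesis .
  qed

  define \<delta> where "\<delta> = 2^S * (real L / real n)^\<tau>"
  have npos: "real n > 0" using n m2 by simp
  have ratio: "real ((n - \<tau>) choose (L - \<tau>)) \<le> real (n choose L) * (real L / real n)^\<tau>"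
  proof -
    have "real ((n - \<tau>) choose (L - \<tau>)) * real n ^ \<tau> \<le> real (n choose L) * real L ^ \<tau>"
      by (rule binom_ratio[OF tL Ln])
    then show ?thesis using npos by (simp add: power_divide field_simps)
  qed
  have sumbad: "(\<Sum>X\<in>\<Omega>. measure_pmf.prob A {D. X \<in> Bad D}) \<le> real (card \<Omega>) * \<delta>"
  proof -
    have "(\<Sum>X\<in>\<Omega>. measure_pmf.prob A {D. X \<in> Bad D})
          = measure_pmf.expectation A (\<lambda>D. real (card {X\<in>\<Omega>. X \<in> Bad D}))"
      by (rule sum_prob[OF finO])
    also have "\<dots> \<le> real (card \<Omega>) * \<delta>"
    proof (rule exp_card_le[OF finO])
      fix D assume D: "D \<in> set_pmf A"
      have eqB: "{X\<in>\<Omega>. X \<in> Bad D} = Bad D" by (auto simp: Bad_def)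
      have c1: "real (card (Bad D)) \<le> real (2^S * ((n - \<tau>) choose (L - \<tau>)))"
        using badcard[OF D] by (simp only: of_nat_le_iff)
      then have "real (card {X\<in>\<Omega>. X \<in> Bad D}) \<le> 2^S * real ((n - \<tau>) choose (L - \<tau>))"
        unfolding eqB by simp
      also have "\<dots> \<le> 2^S * (real (n choose L) * (real L / real n)^\<tau>)"
        by (rule mult_left_mono[OF ratio]) simp
      also have "\<dots> = real (card \<Omega>) * \<delta>" by (simp add: cardO \<delta>_def)
      finally show "real (card {X\<in>\<Omega>. X \<in> Bad D}) \<le> real (card \<Omega>) * \<delta>" .
    qed
    finally show ?thesis .
  qed
  have One: "\<Omega> \<noteq> {}"
  proof -
    have "n choose L > 0" using Ln by simp
    then show ?thesis using cardO by auto
  qed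
  obtain X where XO: "X \<in> \<Omega>" and Xbad: "measure_pmf.prob A {D. X \<in> Bad D} \<le> \<delta>"
  proof (rule ccontr)
    assume "\<not> thesis"
    then have all: "\<forall>X\<in>\<Omega>. \<delta> < measure_pmf.prob A {D. X \<in> Bad D}" using that by force
    have "(\<Sum>X\<in>\<Omega>. \<delta>) < (\<Sum>X\<in>\<Omega>. measure_pmf.prob A {D. X \<in> Bad D})"
      by (rule sum_strict_mono[OF finO One]) (use all in auto)
    then show False using sumbad by simp
  qed

  define g where "g = (\<lambda>a. measure_pmf.prob A {D. a \<in> T D X \<and> card (T D X) < \<tau>})"
  have gnn: "g a \<ge> 0" for a by (simp add: g_def)
  have gsum: "(\<Sum>a\<in>{1..n}. g a) \<le> real \<tau>"
  proof -
    have "(\<Sum>a\<in>{1..n}. g a) = measure_pmf.expectation A (\<lambda>D. real (card {a\<in>{1..n}. a \<in> T D X \<and> card (T D X) < \<tau>}))"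
      unfolding g_def by (rule sum_prob) simp
    also have "\<dots> \<le> real \<tau>"
    proof (rule exp_card_le)
      fix D
      have fT: "finite (T D X)" using TX[OF XO] Ofin[OF XO] finite_subset by blast
      show "real (card {a\<in>{1..n}. a \<in> T D X \<and> card (T D X) < \<tau>}) \<le> real \<tau>"
      proof (cases "card (T D X) < \<tau>")
        case True
        have "card {a\<in>{1..n}. a \<in> T D X \<and> card (T D X) < \<tau>} \<le> card (T D X)"
          by (rule card_mono[OF fT]) auto
        then show ?thesis using True by simp
      next
        case False
        then show ?thesis by simp
      qed
    qed simp
    finally show ?thesis .
  qed
  define H where "H = {a\<in>{1..n}. g a > real \<tau> / real r}"
  have cardH: "card H \<le> r"
  proof -
    have "real (card H) * (real \<tau> / real r) = (\<Sum>a\<in>H. real \<tau> / real r)" by simp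
    also have "\<dots> \<le> (\<Sum>a\<in>H. g a)" by (rule sum_mono) (auto simp: H_def)
    also have "\<dots> \<le> (\<Sum>a\<in>{1..n}. g a)" by (rule sum_mono2) (auto simp: H_def gnn)
    also have "\<dots> \<le> real \<tau>" by (rule gsum)
    finally have "real (card H) * (real \<tau> / real r) \<le> real \<tau>" .
    then have "real (card H) * real \<tau> \<le> real \<tau> * real r" using rpos by (simp add: field_simps)
    then have "real (card H) \<le> real r" using tpos by (simp add: mult.commute)
    then show ?thesis by simp
  qed
  have "n - r \<le> card ({1..n} - H)"
  proof -
    have "card ({1..n} - H) = n - card H" by (subst card_Diff_subset) (auto simp: H_def)
    then show ?thesis using cardH by simp
  qed
  then obtain Y where Ysub: "Y \<subseteq> {1..n} - H" and cY: "card Y = n - r" using ex_card by blast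
  have Yn: "Y \<subseteq> {1..n}" using Ysub by blast
  have fY: "finite Y" using Yn finite_subset by blast
  define x where "x = sl X @ sl Y"
  have vx: "valid_input n x"
    unfolding valid_input_def x_def using sllen[OF XO] slset[OF XO] XO Yn fY nr cY
    by (auto simp: sl_def \<Omega>_def)
  obtain a where dup: "is_dup x a" and pa: "measure_pmf.prob A {D. run_alg D x = Some a} \<ge> 1 / (real n / s)"
    using conc vx unfolding concentrated_def by blast
  have "2 \<le> count (mset (sl X)) a + count (mset (sl Y)) a"
    using dup by (simp add: is_dup_def x_def)
  moreover have "count (mset (sl X)) a \<le> 1" using count_sl[OF Ofin[OF XO]] by (simp add: sl_def)
  ultimately have "count (mset (sl Y)) a \<noteq> 0" by linarith
  then have aY: "a \<in> Y" using count_sl[OF fY] by (simp add: sl_def split: if_splits)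
  then have ga: "g a \<le> real \<tau> / real r" using Ysub by (auto simp: H_def)
  have "measure_pmf.prob A {D. run_alg D x = Some a}
        \<le> measure_pmf.prob A ({D. a \<in> T D X \<and> card (T D X) < \<tau>} \<union> {D. X \<in> Bad D})"
  proof (rule measure_pmf.finite_measure_mono_AE)
    show "AE D\<in>{D. run_alg D x = Some a} in measure_pmf A. D \<in> {D. a \<in> T D X \<and> card (T D X) < \<tau>} \<union> {D. X \<in> Bad D}"
    proof (rule AE_pmfI, intro impI)
      fix D assume D: "D \<in> set_pmf A" and "D \<in> {D. run_alg D x = Some a}"
      then have "a \<in> T D X" using key[OF D XO Yn cY] by (simp add: x_def)
      then show "D \<in> {D. a \<in> T D X \<and> card (T D X) < \<tau>} \<union> {D. X \<in> Bad D}"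
        using XO by (auto simp: Bad_def)
    qed
  qed simp
  also have "\<dots> \<le> g a + measure_pmf.prob A {D. X \<in> Bad D}"
    unfolding g_def by (rule measure_Un_le) simp_all
  also have "\<dots> \<le> real \<tau> / real r + \<delta>" using ga Xbad by linarith
  finally have "1 / (real n / s) \<le> real \<tau> / real r + \<delta>" using pa by linarith
  then show ?thesis by (simp add: \<delta>_def)
qed

lemma ln2_ge: "ln (2::real) \<ge> 1/2"
proof -
  have "exp (1/2::real) ^ 2 = exp (1/2 + 1/2)" by (simp only: power2_eq_square exp_add)
  also have "\<dots> = exp 1" by simp
  also have "\<dots> \<le> 3" by (rule exp_le)
  finally have "exp (1/2::real) ^ 2 < 2 ^ 2" by simp
  then have "exp (1/2::real) < 2" by (rule power_less_imp_less_base) simp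
  then have "ln (exp (1/2::real)) < ln 2" by (subst ln_less_cancel_iff) auto
  then show ?thesis by simp
qed

lemma logbound:
  fixes n :: real assumes "n \<ge> 10000"
  shows "log 2 n \<le> n / 8 - 2"
proof -
  have np: "n > 0" using assms by simp
  have sq: "sqrt n \<ge> 100"
    using assms real_sqrt_le_mono[of 10000 n] by simp
  have "ln n = 2 * ln (sqrt n)" using np by (simp add: ln_sqrt)
  also have "\<dots> < 2 * sqrt n"
  proof -
    have "ln (sqrt n) < sqrt n" by (rule ln_less_self) (use sq np in simp)
    then show ?thesis by simp
  qed
  finally have lnb: "ln n < 2 * sqrt n" .
  have "log 2 n = ln n / ln 2" by (simp add: log_def)
  also have "\<dots> \<le> 2 * ln n"
  proof -
    have "ln n \<ge> 0" using assms by simp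
    then have "ln n / ln 2 \<le> ln n / (1/2)"
      using ln2_ge by (intro divide_left_mono) auto
    then show ?thesis by simp
  qed
  also have "\<dots> \<le> 4 * sqrt n" using lnb by simp
  also have "\<dots> \<le> n / 8 - 2"
  proof -
    have "n = sqrt n * sqrt n" using np by simp
    moreover have "100 * sqrt n \<le> sqrt n * sqrt n" by (rule mult_right_mono) (use sq np in auto)
    ultimately show ?thesis using sq by linarith
  qed
  finally show ?thesis .
qed

lemma S0:
  assumes n2: "n \<ge> 2" and ze: "zero_error n A" and conc: "concentrated n (real n / s) A"
    and sp: "rand_space n 0 A" and spos: "s > 0"
  shows False
proof -
  define x1 where "x1 = replicate (3 * n div 2) (1::nat)"
  define x2 where "x2 = replicate (3 * n div 2) (2::nat)"
  have v1: "valid_input n x1" using n2 by (auto simp: valid_input_def x1_def)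
  have v2: "valid_input n x2" using n2 by (auto simp: valid_input_def x2_def)
  have st0: "st D xs = 0" if "D \<in> set_pmf A" "set xs \<subseteq> {1..n}" for D xs
    using st_bound[of n 0 D xs] that sp by (auto simp: rand_space_def)
  have none: "run_alg D x1 = None" if D: "D \<in> set_pmf A" for D
  proof (rule ccontr)
    assume "run_alg D x1 \<noteq> None"
    then obtain a where a1: "run_alg D x1 = Some a" by (cases "run_alg D x1") simp_all
    have "run_alg D x2 = run_alg D x1"
    proof -
      have h1: "set x1 \<subseteq> {1..n}" using v1 by (simp add: valid_input_def)
      have h2: "set x2 \<subseteq> {1..n}" using v2 by (simp add: valid_input_def)
      have q1: "st D x1 = 0" by (rule st0[OF D h1])
      have q2: "st D x2 = 0" by (rule st0[OF D h2])
      show ?thesis unfolding run_st q1 q2 by (rule refl)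
    qed
    then have a2: "run_alg D x2 = Some a" using a1 by simp
    have d1: "is_dup x1 a" by (rule zero_errorD[OF ze D v1 a1])
    have d2: "is_dup x2 a" by (rule zero_errorD[OF ze D v2 a2])
    have "count (mset x1) a \<ge> 2" using d1 by (simp add: is_dup_def)
    then have e1: "a = 1" by (simp add: x1_def split: if_splits)
    have "count (mset x2) a \<ge> 2" using d2 by (simp add: is_dup_def)
    then have e2: "a = 2" by (simp add: x2_def split: if_splits)
    from e1 e2 show False by simp
  qed
  obtain a where pa: "measure_pmf.prob A {D. run_alg D x1 = Some a} \<ge> 1 / (real n / s)"
    using conc v1 unfolding concentrated_def by blast
  have "{D. run_alg D x1 = Some a} \<inter> set_pmf A = {}"
  proof (rule equals0I)
    fix D assume "D \<in> {D. run_alg D x1 = Some a} \<inter> set_pmf A"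
    then have "run_alg D x1 = Some a" "D \<in> set_pmf A" by blast+
    then show False using none[of D] by simp
  qed
  then have "measure_pmf.prob A {D. run_alg D x1 = Some a} = 0"
    using measure_Int_set_pmf[of A "{D. run_alg D x1 = Some a}"] by simp
  moreover have "1 / (real n / s) > 0" using n2 spos by simp
  ultimately show False using pa by linarith
qed

lemma s_le_n:
  assumes n2: "n \<ge> 2" and conc: "concentrated n (real n / s) A" and spos: "s > 0"
  shows "s \<le> real n"
proof -
  define x1 where "x1 = replicate (3 * n div 2) (1::nat)"
  have v1: "valid_input n x1" using n2 by (auto simp: valid_input_def x1_def)
  obtain a where pa: "measure_pmf.prob A {D. run_alg D x1 = Some a} \<ge> 1 / (real n / s)"
    using conc v1 unfolding concentrated_def by blast
  moreover have "1 / (real n / s) = s / real n" by simp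
  ultimately have "s / real n \<le> 1" using measure_pmf.prob_le_1[of A "{D. run_alg D x1 = Some a}"] by linarith
  then show ?thesis using n2 by (simp add: divide_le_eq)
qed

lemma final_arith:
  fixes n m r L S k \<tau> :: nat and s l :: real
  assumes n: "n = 2*m" and m2: "m \<ge> 2" and r: "r = m div 2" and L: "L = m + r"
    and S1: "S \<ge> 1" and l1: "l \<ge> 1" and lb: "l \<le> real n / 8 - 2"
    and k1: "real k \<le> l + 1" and k2: "real n \<le> 2^k" and tau: "\<tau> = 3*(S+k)"
    and sn: "s \<le> real n" and spos: "s > 0"
    and core: "\<tau> \<le> L \<Longrightarrow> s / real n \<le> real \<tau> / real r + 2^S * (real L / real n)^\<tau>"
  shows "1/100 * s / l \<le> real S"
proof -
  have npos: "real n > 0" using n m2 by simp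
  have rpos: "real r > 0" using m2 r by simp
  have n8r: "real n \<le> 8 * real r"
  proof -
    have "n \<le> 8 * r" using n r m2 by linarith
    then show ?thesis by linarith
  qed
  have "s \<le> 73 * real S * l"
  proof (cases "\<tau> \<le> L")
    case True
    have c: "s / real n \<le> real \<tau> / real r + 2^S * (real L / real n)^\<tau>" using core[OF True] .
    have Ln: "real L / real n \<le> 3/4"
    proof -
      have "4 * L \<le> 3 * n" using n L r by linarith
      then have "4 * real L \<le> 3 * real n" by linarith
      then show ?thesis using npos by (simp add: divide_le_eq)
    qed
    have "(real L / real n)^\<tau> \<le> (3/4)^\<tau>" by (rule power_mono[OF Ln]) simp
    also have "(3/4::real)^\<tau> = ((3/4)^3)^(S+k)" unfolding tau by (simp only: power_mult)
    also have "\<dots> \<le> (1/2)^(S+k)" by (rule power_mono) (simp_all add: power3_eq_cube)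
    finally have p1: "(real L / real n)^\<tau> \<le> (1/2)^(S+k)" .
    have "2^S * (real L / real n)^\<tau> \<le> 2^S * (1/2::real)^(S+k)"
      by (rule mult_left_mono[OF p1]) simp
    also have "\<dots> = (1/2)^k" by (simp add: power_add power_one_over)
    also have "\<dots> = 1 / 2^k" by (simp add: power_one_over)
    also have "\<dots> \<le> 1 / real n" using k2 npos by (intro divide_left_mono) auto
    finally have p2: "2^S * (real L / real n)^\<tau> \<le> 1 / real n" .
    have p3: "real \<tau> / real r \<le> 8 * real \<tau> / real n"
    proof -
      have "real \<tau> * real n \<le> real \<tau> * (8 * real r)" by (rule mult_left_mono[OF n8r]) simp
      then show ?thesis using npos rpos by (simp add: divide_simps mult.commute mult.left_commute)
    qed
    have "s / real n \<le> (8 * real \<tau> + 1) / real n" using c p2 p3 by (simp add: add_divide_distrib)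
    then have "s \<le> 8 * real \<tau> + 1" using npos by (simp add: divide_le_cancel)
    also have "\<dots> = 24 * real S + 24 * real k + 1" by (simp add: tau)
    also have "\<dots> \<le> 24 * real S + 24 * (l + 1) + 1" using k1 by simp
    also have "\<dots> \<le> 73 * real S * l"
    proof -
      have "real S * l \<ge> real S" using S1 l1 by (simp add: mult_le_cancel_left1)
      moreover have "real S * l \<ge> l" using S1 l1 by (simp add: mult_le_cancel_right1)
      moreover have "73 * real S * l = 73 * (real S * l)" by simp
      moreover have "real S \<ge> 1" using S1 by simp
      ultimately show ?thesis using l1 by (smt (verit))
    qed
    finally show ?thesis .
  next
    case False
    then have "L + 1 \<le> 3 * (S + k)" using tau by simp
    moreover have "3 * m \<le> 2 * L + 1" using L r by linarith
    ultimately have "3 * m + 1 \<le> 6 * (S + k)" by linarith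
    then have "real (3 * m + 1) \<le> real (6 * (S + k))" by (simp only: of_nat_le_iff)
    then have "3 * real m \<le> 6 * (real S + real k) - 1" by simp
    then have "real S \<ge> real n / 8" using k1 lb n by simp
    then have "s \<le> 8 * real S" using sn by linarith
    also have "\<dots> \<le> 73 * real S * l"
    proof -
      have "real S * l \<ge> real S" using S1 l1 by (simp add: mult_le_cancel_left1)
      moreover have "73 * real S * l = 73 * (real S * l)" by simp
      moreover have "real S \<ge> 1" using S1 by simp
      ultimately show ?thesis by (smt (verit))
    qed
    finally show ?thesis .
  qed
  moreover have "0 \<le> real S * l" using l1 by simp
  moreover have "73 * real S * l = 73 * (real S * l)" by simp
  ultimately have "s \<le> 100 * (real S * l)" by (smt (verit))
  then show ?thesis using l1 by (simp add: divide_le_eq mult.commute mult.left_commute)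
qed


theorem mainTheorem3:
  shows "\<exists>c > 0. \<exists>N. \<forall>n \<ge> N. \<forall>(s::real) > 0. \<forall>A S.
           even n \<and> zero_error n A \<and> concentrated n (real n / s) A \<and> rand_space n S A
           \<longrightarrow> real S \<ge> c * s / log 2 (real n)"
proof (intro exI[of _ "1/100::real"] conjI exI[of _ "10000::nat"] allI impI)
  show "(0::real) < 1/100" by simp
  fix n :: nat and s :: real and A :: "det_alg pmf" and S :: nat
  assume nN: "10000 \<le> n" and spos: "0 < s"
    and H: "even n \<and> zero_error n A \<and> concentrated n (real n / s) A \<and> rand_space n S A"
  from H have ev: "even n" and ze: "zero_error n A" and conc: "concentrated n (real n / s) A"
    and sp: "rand_space n S A" by auto
  obtain m where n: "n = 2 * m" using ev by (auto elim: evenE)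
  have m2: "m \<ge> 2" using nN n by simp
  define r where "r = m div 2"
  define L where "L = m + r"
  have n2: "n \<ge> 2" using nN by simp
  have sn: "s \<le> real n" by (rule s_le_n[OF n2 conc spos])
  define l where "l = log 2 (real n)"
  have l1: "l \<ge> 1"
  proof -
    have "log 2 (2::real) \<le> log 2 (real n)" using n2 by (subst log_le_cancel_iff) auto
    then show ?thesis by (simp add: l_def)
  qed
  have lb: "l \<le> real n / 8 - 2" unfolding l_def by (rule logbound) (use nN in simp)
  show "1/100 * s / log 2 (real n) \<le> real S"
  proof (cases "S = 0")
    case True
    then have "rand_space n 0 A" using sp by simp
    then show ?thesis using S0[OF n2 ze conc _ spos] by blast
  next
    case False
    then have S1: "S \<ge> 1" by simp
    define k where "k = nat \<lceil>l\<rceil>"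
    have l0: "l \<ge> 0" using l1 by simp
    have kl: "real k = of_int \<lceil>l\<rceil>" using l0 by (simp add: k_def)
    have k1: "real k \<le> l + 1" using kl by linarith
    have k2: "real n \<le> 2^k"
    proof -
      have "real n = 2 powr l" using n2 by (simp add: l_def)
      also have "\<dots> \<le> 2 powr (real k)" using kl by (intro powr_mono) auto
      also have "\<dots> = 2^k" by (simp add: powr_realpow)
      finally show ?thesis .
    qed
    define \<tau> where "\<tau> = 3 * (S + k)"
    have "1/100 * s / l \<le> real S"
    proof (rule final_arith[OF n m2 r_def L_def S1 l1 lb k1 k2 \<tau>_def sn spos])
      assume tL: "\<tau> \<le> L"
      have tpos: "0 < \<tau>" using S1 by (simp add: \<tau>_def)
      show "s / real n \<le> real \<tau> / real r + 2^S * (real L / real n)^\<tau>"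
        by (rule core[OF n m2 r_def L_def tpos tL ze conc sp spos])
    qed
    then show ?thesis by (simp add: l_def)
  qed
qed

end
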